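(* Let $T$ be a subordinator with Laplace exponent $\phi(\lambda)=b\lambda+\int_{(0,\infty)}(1-e^{-\lambda s})\mu(ds)$, where $b\ge0$ and $\mu$ is the Lévy measure. Assume that $H(\lambda)=\phi(\lambda)-\lambda\phi'(\lambda)$ varies regularly at $0$ (at $\infty$, respectively) with index $\gamma\in[0,1]$. Then \[ \mu(r,\infty)\sim\frac{1}{\Gamma(2-\gamma)}H(r^{-1}),\qquad r\to\infty\ (r\to0,\text{ resp.}). \]
   Context: A subordinator is a non-decreasing Lévy process; $\mathbb{E}e^{-\lambda T_t}=e^{-t\phi(\lambda)}$. The Lévy measure $\mu$ is a measure on $(0,\infty)$ with $\int(1\wedge s)\mu(ds)<\infty$. A function $\ell:(0,\infty)\to(0,\infty)$ varies regularly at $\infty$ (at $0$) with index $\alpha$ if $\ell(\lambda s)/\ell(s)\to\lambda^\alpha$ as $s\to\infty$ ($s\to0$) for every $\lambda>0$. $f(r)\sim g(r)$ means $f(r)/g(r)\to1$. *)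

theory Defs
  imports "HOL-Analysis.Analysis" "HOL-Library.Landau_Symbols"
begin

definition levy_measure :: "real measure \<Rightarrow> bool" where
  "levy_measure mu \<longleftrightarrow> sets mu = sets borel \<and> emeasure mu {..0} = 0 \<and>
     (\<integral>\<^sup>+ s. ennreal (min 1 s) \<partial>mu) < \<infinity>"

definition laplace_exponent :: "real \<Rightarrow> real measure \<Rightarrow> real \<Rightarrow> real" where
  "laplace_exponent b mu lam = b * lam + (\<integral> s. (1 - exp (- lam * s)) \<partial>mu)"

definition regvar_at_top :: "(real \<Rightarrow> real) \<Rightarrow> real \<Rightarrow> bool" where
  "regvar_at_top l a \<longleftrightarrow> (\<forall>s>0. l s > 0) \<and>
     (\<forall>c>0. ((\<lambda>s. l (c * s) / l s) \<longlongrightarrow> c powr a) at_top)"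

definition regvar_at_0 :: "(real \<Rightarrow> real) \<Rightarrow> real \<Rightarrow> bool" where
  "regvar_at_0 l a \<longleftrightarrow> (\<forall>s>0. l s > 0) \<and>
     (\<forall>c>0. ((\<lambda>s. l (c * s) / l s) \<longlongrightarrow> c powr a) (at_right 0))"

end

theory Submission
  imports Defs
begin
lemma mvt_quot_bound:
  fixes g g' :: "real \<Rightarrow> real"
  assumes y: "y \<in> {a<..<b}" and x: "x \<in> {a<..<b}" and ne: "y \<noteq> x"
    and der: "\<forall>t\<in>{a<..<b}. (g has_real_derivative g' t) (at t)"
    and bnd: "\<forall>t\<in>{a<..<b}. \<bar>g' t\<bar> \<le> W"
  shows "\<bar>(g y - g x) / (y - x)\<bar> \<le> W"
proof -
  have gen: "\<bar>(g v - g u) / (v - u)\<bar> \<le> W" if uv: "u < v" "u \<in> {a<..<b}" "v \<in> {a<..<b}" for u v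
  proof -
    have "\<And>t. u \<le> t \<Longrightarrow> t \<le> v \<Longrightarrow> (g has_real_derivative g' t) (at t)"
      using der uv by auto
    from MVT2[OF \<open>u < v\<close> this] obtain z where z: "u < z" "z < v" "g v - g u = (v - u) * g' z"
      by blast
    have "(g v - g u) / (v - u) = g' z" using z uv by simp
    moreover have "z \<in> {a<..<b}" using z uv by auto
    ultimately show ?thesis using bnd by auto
  qed
  show ?thesis
  proof (cases "x < y")
    case True then show ?thesis using gen[of x y] x y by simp
  next
    case False
    then have "y < x" using ne by simp
    have "(g y - g x) / (y - x) = (g x - g y) / (x - y)"
      by (metis minus_diff_eq minus_divide_divide)
    then show ?thesis using gen[OF \<open>y < x\<close>] x y by simp
  qed
qed

lemma deriv_under_integral:
  fixes f f' :: "real \<Rightarrow> 'a \<Rightarrow> real" and w :: "'a \<Rightarrow> real"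
  assumes x: "a < x" "x < b"
    and der: "AE s in M. \<forall>t\<in>{a<..<b}. ((\<lambda>t. f t s) has_real_derivative f' t s) (at t)"
    and bnd: "AE s in M. \<forall>t\<in>{a<..<b}. \<bar>f' t s\<bar> \<le> w s"
    and w: "integrable M w"
    and intf: "\<And>t. t \<in> {a<..<b} \<Longrightarrow> integrable M (f t)"
    and mf': "f' x \<in> borel_measurable M"
  shows "((\<lambda>t. \<integral>s. f t s \<partial>M) has_real_derivative (\<integral>s. f' x s \<partial>M)) (at x)"
proof -
  have key: "(\<lambda>i. ((\<integral>s. f (X i) s \<partial>M) - (\<integral>s. f x s \<partial>M)) / (X i - x)) \<longlonglongrightarrow> (\<integral>s. f' x s \<partial>M)"
    if X: "\<forall>i. X i \<in> UNIV - {x}" "X \<longlonglongrightarrow> x" for X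
  proof -
    have "eventually (\<lambda>i. X i \<in> {a<..<b}) sequentially"
      using X(2) x by (intro topological_tendstoD) auto
    then obtain N where N: "\<And>i. i \<ge> N \<Longrightarrow> X i \<in> {a<..<b}"
      by (auto simp: eventually_sequentially)
    define q where "q i s = (f (X (i+N)) s - f x s) / (X (i+N) - x)" for i s
    have xab: "x \<in> {a<..<b}" using x by auto
    have XN: "X (i+N) \<in> {a<..<b}" "X (i + N) \<noteq> x" for i using N[of "i+N"] X(1) by auto
    have qint: "integral\<^sup>L M (q i) = ((\<integral>s. f (X (i+N)) s \<partial>M) - (\<integral>s. f x s \<partial>M)) / (X (i+N) - x)" for i
      unfolding q_def using intf[OF XN(1)] intf[OF xab] by simp
    have "(\<lambda>i. integral\<^sup>L M (q i)) \<longlonglongrightarrow> (\<integral>s. f' x s \<partial>M)"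
    proof (rule integral_dominated_convergence[OF mf' _ w])
      show "q i \<in> borel_measurable M" for i
        unfolding q_def using borel_measurable_integrable[OF intf[OF XN(1)]] borel_measurable_integrable[OF intf[OF xab]]
        by (intro borel_measurable_divide borel_measurable_diff) auto
      show "AE s in M. (\<lambda>i. q i s) \<longlonglongrightarrow> f' x s"
        using der
      proof eventually_elim
        case (elim s)
        then have "((\<lambda>t. f t s) has_real_derivative f' x s) (at x)" using xab by blast
        then have "((\<lambda>y. (f y s - f x s) / (y - x)) \<longlongrightarrow> f' x s) (at x)"
          by (simp add: has_field_derivative_iff)
        moreover have "(\<lambda>i. X (i+N)) \<longlonglongrightarrow> x" using X(2) by (rule LIMSEQ_ignore_initial_segment)
        ultimately have "((\<lambda>y. (f y s - f x s) / (y - x)) \<circ> (\<lambda>i. X (i+N))) \<longlonglongrightarrow> f' x s"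
          unfolding tendsto_at_iff_sequentially using XN(2) by (metis Diff_iff UNIV_I singletonD)
        then show ?case unfolding q_def comp_def .
      qed
      show "AE s in M. norm (q i s) \<le> w s" for i
        using der bnd
      proof eventually_elim
        case (elim s)
        show ?case unfolding q_def real_norm_def
          by (rule mvt_quot_bound[OF XN(1) xab XN(2)]) (use elim in auto)
      qed
    qed
    then have "(\<lambda>i. ((\<integral>s. f (X (i+N)) s \<partial>M) - (\<integral>s. f x s \<partial>M)) / (X (i+N) - x)) \<longlonglongrightarrow> (\<integral>s. f' x s \<partial>M)"
      using qint by simp
    then show ?thesis by (rule LIMSEQ_offset)
  qed
  show ?thesis unfolding has_field_derivative_iff tendsto_at_iff_sequentially comp_def
    using key by blast
qed

locale levy =
  fixes mu :: "real measure"
  assumes L: "levy_measure mu"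
begin

lemma sets_mu: "sets mu = sets borel" using L by (simp add: levy_measure_def)
lemma space_mu: "space mu = UNIV" using sets_eq_imp_space_eq[OF sets_mu] by simp
lemma meas_mu: "borel_measurable mu = borel_measurable borel"
  by (rule measurable_cong_sets[OF sets_mu refl])

lemma AE_pos: "AE s in mu. 0 < s"
proof (rule AE_I'[of "{..0}"])
  show "{..0} \<in> null_sets mu" using L sets_mu by (auto simp: levy_measure_def null_sets_def)
  show "{x \<in> space mu. \<not> 0 < x} \<subseteq> {..0}" by auto
qed

lemma nn_min_fin: "(\<integral>\<^sup>+ s. ennreal (min 1 s) \<partial>mu) < \<infinity>"
  using L by (simp add: levy_measure_def)

lemma integrable_min: "integrable mu (\<lambda>s. min 1 s)"
  unfolding integrable_iff_bounded
proof
  show "(\<lambda>s. min 1 s) \<in> borel_measurable mu" unfolding meas_mu by measurable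
  have "(\<integral>\<^sup>+ s. ennreal (norm (min 1 s :: real)) \<partial>mu) = (\<integral>\<^sup>+ s. ennreal (min 1 s) \<partial>mu)"
    by (rule nn_integral_cong_AE) (use AE_pos in \<open>eventually_elim, auto\<close>)
  then show "(\<integral>\<^sup>+ s. ennreal (norm (min 1 s :: real)) \<partial>mu) < \<infinity>" using nn_min_fin by simp
qed

lemma tail_fin:
  assumes c: "c > 0"
  shows "emeasure mu {c<..} < \<infinity>"
proof -
  have "ennreal (min 1 c) * emeasure mu {c<..} = (\<integral>\<^sup>+ s. ennreal (min 1 c) * indicator {c<..} s \<partial>mu)"
    by (rule nn_integral_cmult_indicator[symmetric]) (simp add: sets_mu)
  also have "\<dots> \<le> (\<integral>\<^sup>+ s. ennreal (min 1 s) \<partial>mu)"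
    by (intro nn_integral_mono) (auto simp: indicator_def intro!: ennreal_leI)
  also have "\<dots> < \<infinity>" by (rule nn_min_fin)
  finally have "ennreal (min 1 c) * emeasure mu {c<..} < \<infinity>" .
  moreover have "ennreal (min 1 c) \<noteq> 0" using c by simp
  ultimately show ?thesis
    by (auto simp: ennreal_mult_less_top top_unique)
qed

lemma sigma_finite_mu: "sigma_finite_measure mu"
proof
  let ?A = "insert {..0} (range (\<lambda>n::nat. {1 / real (Suc n)<..}))"
  have "countable ?A" by simp
  moreover have "?A \<subseteq> sets mu" by (auto simp: sets_mu)
  moreover have "\<Union>?A = space mu"
  proof -
    have "s \<in> \<Union>?A" for s :: real
    proof (cases "s \<le> 0")
      case False
      then obtain n where "1 / real (Suc n) < s"
        by (metis not_le nat_approx_posE)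
      then show ?thesis by auto
    qed auto
    then show ?thesis by (auto simp: space_mu)
  qed
  moreover have "\<forall>a\<in>?A. emeasure mu a \<noteq> \<infinity>"
    using L tail_fin by (auto simp: levy_measure_def less_top)
  ultimately show "\<exists>A. countable A \<and> A \<subseteq> sets mu \<and> \<Union> A = space mu \<and> (\<forall>a\<in>A. emeasure mu a \<noteq> \<infinity>)"
    by blast
qed

lemma integrable_1m:
  assumes l: "l > 0"
  shows "integrable mu (\<lambda>s. 1 - exp (- l * s))"
proof (rule Bochner_Integration.integrable_bound)
  show "integrable mu (\<lambda>s. max 1 l * min 1 s)" using integrable_min by simp
  show "(\<lambda>s. 1 - exp (- l * s)) \<in> borel_measurable mu" unfolding meas_mu by measurable
  show "AE s in mu. norm (1 - exp (- l * s)) \<le> norm (max 1 l * min 1 s)"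
    using AE_pos
  proof eventually_elim
    case (elim s)
    have e1: "exp (- l * s) \<le> 1" using l elim by simp
    have e2: "1 - l * s \<le> exp (- l * s)" using exp_ge_add_one_self[of "- l * s"] by simp
    have "1 - exp (- l * s) \<le> max 1 l * min 1 s"
    proof (cases "s \<le> 1")
      case True
      have "l * s \<le> max 1 l * s" using elim by (intro mult_right_mono) auto
      then show ?thesis using True e2 by (simp add: min_def)
    next
      case False
      have "1 \<le> max 1 l" by simp
      then show ?thesis using False by (simp add: min_def) (smt (verit) exp_gt_zero)
    qed
    then show ?case using e1 elim by (simp add: abs_of_nonneg)
  qed
qed

lemma integrable_sexp:
  assumes l: "l > 0"
  shows "integrable mu (\<lambda>s. s * exp (- l * s))"
proof (rule Bochner_Integration.integrable_bound)
  show "integrable mu (\<lambda>s. max 1 (1/l) * min 1 s)" using integrable_min by simp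
  show "(\<lambda>s. s * exp (- l * s)) \<in> borel_measurable mu" unfolding meas_mu by measurable
  show "AE s in mu. norm (s * exp (- l * s)) \<le> norm (max 1 (1/l) * min 1 s)"
    using AE_pos
  proof eventually_elim
    case (elim s)
    have e1: "exp (- l * s) \<le> 1" using l elim by simp
    have e2: "l * s \<le> exp (l * s)" using exp_ge_add_one_self[of "l * s"] by linarith
    have "l * s * exp (- l * s) \<le> 1"
      using e2 by (simp add: exp_minus field_simps)
    then have e3: "s * exp (- l * s) \<le> 1 / l" using l by (simp add: field_simps)
    have "s * exp (- l * s) \<le> max 1 (1/l) * min 1 s"
    proof (cases "s \<le> 1")
      case True
      have "s * exp (- l * s) \<le> s * 1" using e1 elim by (intro mult_left_mono) auto
      also have "\<dots> \<le> max 1 (1/l) * s" using elim by (simp add: mult_right_mono)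
      finally show ?thesis using True by (simp add: min_def)
    next
      case False
      then show ?thesis using e3 by (simp add: min_def)
    qed
    then show ?case using elim by (simp add: abs_of_nonneg)
  qed
qed

lemma laplace_deriv:
  assumes l: "l > 0"
  shows "(laplace_exponent b mu has_real_derivative (b + (\<integral>s. s * exp (- l * s) \<partial>mu))) (at l)"
proof -
  have I: "((\<lambda>t. \<integral>s. 1 - exp (- t * s) \<partial>mu) has_real_derivative (\<integral>s. s * exp (- l * s) \<partial>mu)) (at l)"
  proof (rule deriv_under_integral[where a="l/2" and b="2*l" and w="\<lambda>s. s * exp (- (l/2) * s)"])
    show "l / 2 < l" "l < 2 * l" using l by auto
    show "AE s in mu. \<forall>t\<in>{l / 2<..<2 * l}. ((\<lambda>t. 1 - exp (- t * s)) has_real_derivative s * exp (- t * s)) (at t)"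
      by (intro AE_I2 ballI) (auto intro!: derivative_eq_intros)
    show "AE s in mu. \<forall>t\<in>{l / 2<..<2 * l}. \<bar>s * exp (- t * s)\<bar> \<le> s * exp (- (l / 2) * s)"
      using AE_pos
    proof eventually_elim
      case (elim s)
      show ?case
      proof
        fix t assume t: "t \<in> {l / 2<..<2 * l}"
        have "exp (- t * s) \<le> exp (- (l/2) * s)" using t elim by (auto intro!: mult_right_mono)
        then show "\<bar>s * exp (- t * s)\<bar> \<le> s * exp (- (l / 2) * s)"
          using elim by (simp add: abs_of_nonneg mult_left_mono)
      qed
    qed
    show "integrable mu (\<lambda>s. s * exp (- (l / 2) * s))" using integrable_sexp[of "l/2"] l by simp
    show "integrable mu (\<lambda>s. 1 - exp (- t * s))" if "t \<in> {l / 2<..<2 * l}" for t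
      using integrable_1m[of t] that l by simp
    show "(\<lambda>s. s * exp (- l * s)) \<in> borel_measurable mu" unfolding meas_mu by measurable
  qed
  have "((\<lambda>t. b * t + (\<integral>s. 1 - exp (- t * s) \<partial>mu)) has_real_derivative (b * 1 + (\<integral>s. s * exp (- l * s) \<partial>mu))) (at l)"
    by (intro DERIV_add[OF _ I] DERIV_cmult DERIV_ident)
  then show ?thesis unfolding laplace_exponent_def by simp
qed

lemma H_formula:
  assumes l: "l > 0"
  shows "laplace_exponent b mu l - l * deriv (laplace_exponent b mu) l
     = (\<integral>s. 1 - exp (- l * s) - l * s * exp (- l * s) \<partial>mu)"
proof -
  have d: "deriv (laplace_exponent b mu) l = b + (\<integral>s. s * exp (- l * s) \<partial>mu)"
    by (rule DERIV_imp_deriv[OF laplace_deriv[OF l]])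
  have "(\<integral>s. 1 - exp (- l * s) - l * s * exp (- l * s) \<partial>mu)
      = (\<integral>s. 1 - exp (- l * s) \<partial>mu) - (\<integral>s. l * (s * exp (- l * s)) \<partial>mu)"
    using integrable_1m[OF l] integrable_sexp[OF l] by (simp add: mult.assoc)
  also have "\<dots> = (\<integral>s. 1 - exp (- l * s) \<partial>mu) - l * (\<integral>s. s * exp (- l * s) \<partial>mu)"
    by simp
  finally show ?thesis unfolding d laplace_exponent_def by (simp add: algebra_simps)
qed

end

lemma kern_has_integral:
  fixes a y :: real
  assumes a: "a > 0" and y: "y \<ge> 0"
  shows "((\<lambda>u. a^2 * u * exp (- a * u)) has_integral (1 - exp (- a * y) - a * y * exp (- a * y))) {0..y}"
proof -
  define G where "G u = - (1 + a * u) * exp (- a * u)" for u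
  have "((\<lambda>u. a^2 * u * exp (- a * u)) has_integral (G y - G 0)) {0..y}"
  proof (rule fundamental_theorem_of_calculus[OF y])
    fix x assume "x \<in> {0..y}"
    show "(G has_vector_derivative a^2 * x * exp (- a * x)) (at x within {0..y})"
      unfolding G_def has_real_derivative_iff_has_vector_derivative[symmetric]
      by (auto intro!: derivative_eq_intros simp: power2_eq_square algebra_simps)
  qed
  also have "G y - G 0 = 1 - exp (- a * y) - a * y * exp (- a * y)"
    unfolding G_def by (simp add: algebra_simps)
  finally show ?thesis .
qed

lemma kern_nn:
  fixes x :: real assumes "x \<ge> 0"
  shows "0 \<le> 1 - exp (- x) - x * exp (- x)"
proof -
  have "1 + x \<le> exp x" by (rule exp_ge_add_one_self)
  then have "(1 + x) * exp (- x) \<le> 1" by (simp add: exp_minus field_simps)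
  then show ?thesis by (simp add: algebra_simps)
qed

context levy
begin

definition H0 :: "real \<Rightarrow> real" where
  "H0 l = (\<integral>s. 1 - exp (- l * s) - l * s * exp (- l * s) \<partial>mu)"

lemma integrable_H0:
  assumes l: "l > 0"
  shows "integrable mu (\<lambda>s. 1 - exp (- l * s) - l * s * exp (- l * s))"
proof -
  have "integrable mu (\<lambda>s. (1 - exp (- l * s)) - l * (s * exp (- l * s)))"
    using integrable_1m[OF l] integrable_sexp[OF l] by simp
  then show ?thesis by (simp add: mult.assoc)
qed

lemma tail_mono:
  assumes "0 < x" "x \<le> y"
  shows "measure mu {y<..} \<le> measure mu {x<..}"
proof (rule measure_mono_fmeasurable)
  show "{y<..} \<subseteq> {x<..}" using assms by auto
  show "{y<..} \<in> sets mu" by (simp add: sets_mu)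
  show "{x<..} \<in> fmeasurable mu" using tail_fin[OF assms(1)] by (simp add: fmeasurable_def sets_mu)
qed

definition Ft :: "real \<Rightarrow> real" where
  "Ft x = indicator {0<..} x * measure mu {x<..}"

lemma Ft_meas: "Ft \<in> borel_measurable borel"
proof -
  have "mono_on {0<..} (\<lambda>x. - measure mu {x<..})"
    by (rule mono_onI) (use tail_mono in auto)
  then have "(\<lambda>x. - measure mu {x<..}) \<in> borel_measurable (restrict_space borel {0<..})"
    by (rule borel_measurable_mono_on_fnc)
  then have "(\<lambda>x. indicator {0<..} x *\<^sub>R (- measure mu {x<..})) \<in> borel_measurable borel"
    by (subst (asm) borel_measurable_restrict_space_iff) auto
  then have "(\<lambda>x. - (indicator {0<..} x *\<^sub>R (- measure mu {x<..}))) \<in> borel_measurable borel"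
    by measurable
  then show ?thesis unfolding Ft_def by simp
qed

lemma fubini_rep:
  assumes r: "r > 0" and a: "a > 0"
  shows "(\<integral>\<^sup>+ u. ennreal (Ft (r * u) * (a^2 * u * exp (- a * u))) \<partial>lborel) = ennreal (H0 (a / r))"
proof -
  interpret sigma_finite_measure mu by (rule sigma_finite_mu)
  interpret P: pair_sigma_finite mu lborel
    unfolding pair_sigma_finite_def using sigma_finite_mu lborel.sigma_finite_measure_axioms by auto
  define k where "k u = a^2 * u * exp (- a * u)" for u :: real
  define S where "S = {p :: real \<times> real. 0 \<le> snd p \<and> r * snd p < fst p}"
  have "S = {p \<in> space (borel \<Otimes>\<^sub>M borel). 0 \<le> snd p \<and> r * snd p < fst p}"
    by (simp add: space_pair_measure S_def)
  also have "\<dots> \<in> sets (borel \<Otimes>\<^sub>M borel)" by measurable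
  finally have Smeas: "S \<in> sets (borel \<Otimes>\<^sub>M borel)" .
  have sets_prod: "sets (mu \<Otimes>\<^sub>M lborel) = sets (borel \<Otimes>\<^sub>M borel)"
    by (rule sets_pair_measure_cong[OF sets_mu sets_lborel])
  have "ennreal (H0 (a / r)) = (\<integral>\<^sup>+ s. ennreal (1 - exp (- (a/r) * s) - (a/r) * s * exp (- (a/r) * s)) \<partial>mu)"
    unfolding H0_def
  proof (rule nn_integral_eq_integral[symmetric])
    show "integrable mu (\<lambda>s. 1 - exp (- (a/r) * s) - (a/r) * s * exp (- (a/r) * s))"
      using integrable_H0[of "a/r"] a r by simp
    show "AE s in mu. 0 \<le> 1 - exp (- (a/r) * s) - (a/r) * s * exp (- (a/r) * s)"
      using AE_pos by eventually_elim (use kern_nn[of "(a/r) * _"] a r in auto)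
  qed
  also have "\<dots> = (\<integral>\<^sup>+ s. (\<integral>\<^sup>+ u. indicator S (s, u) * ennreal (k u) \<partial>lborel) \<partial>mu)"
  proof (rule nn_integral_cong_AE)
    show "AE s in mu. ennreal (1 - exp (- (a/r) * s) - (a/r) * s * exp (- (a/r) * s))
        = (\<integral>\<^sup>+ u. indicator S (s, u) * ennreal (k u) \<partial>lborel)"
      using AE_pos
    proof eventually_elim
      case (elim s)
      have y: "s / r \<ge> 0" using elim r by simp
      have e: "a * (s / r) = (a / r) * s" by simp
      have "(\<integral>\<^sup>+ u. ennreal (indicator {0..s/r} u * k u) \<partial>lborel)
          = ennreal (1 - exp (- a * (s/r)) - a * (s/r) * exp (- a * (s/r)))"
        unfolding k_def
        by (rule nn_integral_has_integral_lebesgue[OF _ kern_has_integral[OF a y]])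
           (use a in auto)
      also have "(\<integral>\<^sup>+ u. ennreal (indicator {0..s/r} u * k u) \<partial>lborel)
          = (\<integral>\<^sup>+ u. indicator S (s, u) * ennreal (k u) \<partial>lborel)"
      proof (rule nn_integral_cong_AE)
        show "AE u in lborel. ennreal (indicator {0..s/r} u * k u) = indicator S (s, u) * ennreal (k u)"
          using AE_lborel_singleton[of "s/r"]
        proof eventually_elim
          case (elim u)
          have "(u \<in> {0..s/r}) = (0 \<le> u \<and> r * u \<le> s)" using r by (auto simp: field_simps)
          moreover have "(r * u \<le> s \<and> u \<noteq> s / r) = (r * u < s)" using r by (auto simp: field_simps)
          ultimately show ?case using elim by (auto simp: S_def indicator_def)
        qed
      qed
      finally show ?case unfolding e by simp
    qed
  qed
  also have "\<dots> = (\<integral>\<^sup>+ u. (\<integral>\<^sup>+ s. indicator S (s, u) * ennreal (k u) \<partial>mu) \<partial>lborel)"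
  proof (rule P.Fubini'[symmetric])
    have "(\<lambda>p. indicator S p * ennreal (k (snd p))) \<in> borel_measurable (borel \<Otimes>\<^sub>M borel)"
      unfolding k_def using Smeas by measurable
    then show "case_prod (\<lambda>s u. indicator S (s, u) * ennreal (k u)) \<in> borel_measurable (mu \<Otimes>\<^sub>M lborel)"
      by (subst measurable_cong_sets[OF sets_prod refl]) (simp add: case_prod_beta')
  qed
  also have "\<dots> = (\<integral>\<^sup>+ u. ennreal (Ft (r * u) * k u) \<partial>lborel)"
  proof (rule nn_integral_cong_AE)
    show "AE u in lborel. (\<integral>\<^sup>+ s. indicator S (s, u) * ennreal (k u) \<partial>mu) = ennreal (Ft (r * u) * k u)"
      using AE_lborel_singleton[of 0]
    proof eventually_elim
      case (elim u)
      have "(\<integral>\<^sup>+ s. indicator S (s, u) * ennreal (k u) \<partial>mu)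
          = (\<integral>\<^sup>+ s. (ennreal (k u) * indicator {0..} u) * indicator {r*u<..} s \<partial>mu)"
        by (intro nn_integral_cong) (auto simp: S_def indicator_def)
      also have "\<dots> = ennreal (k u) * indicator {0..} u * emeasure mu {r*u<..}"
        by (rule nn_integral_cmult_indicator) (simp add: sets_mu)
      also have "\<dots> = ennreal (Ft (r * u) * k u)"
      proof (cases "u > 0")
        case True
        have ru: "r * u > 0" using r True by simp
        have "emeasure mu {r*u<..} = ennreal (measure mu {r*u<..})"
          using tail_fin[OF ru] by (intro emeasure_eq_ennreal_measure) auto
        moreover have "k u \<ge> 0" unfolding k_def using True by simp
        ultimately show ?thesis using True ru
          by (simp add: Ft_def ennreal_mult' mult.commute)
      next
        case False
        then have "u < 0" using elim by simp
        then have "\<not> 0 < r * u" using r by (smt (verit) mult_pos_neg)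
        then show ?thesis using \<open>u < 0\<close> by (simp add: Ft_def indicator_def)
      qed
      finally show ?case .
    qed
  qed
  finally show ?thesis unfolding k_def by simp
qed

end

definition good :: "(real \<Rightarrow> real) \<Rightarrow> bool" where
  "good h \<longleftrightarrow> (\<forall>u. 0 \<le> h u) \<and> (\<forall>u\<le>0. h u = 0) \<and> h \<in> borel_measurable borel
     \<and> (\<forall>l>0. integrable lborel (\<lambda>u. h u * u * exp (- l * u)))"

definition Phi :: "(real \<Rightarrow> real) \<Rightarrow> (real \<Rightarrow> real) \<Rightarrow> real" where
  "Phi h c = (\<integral>u. h u * u * exp (- u) * c (exp (- u)) \<partial>lborel)"

lemma good_nn: "good h \<Longrightarrow> 0 \<le> h u" unfolding good_def by blast
lemma good_zero: "good h \<Longrightarrow> u \<le> 0 \<Longrightarrow> h u = 0" unfolding good_def by blast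
lemma good_meas: "good h \<Longrightarrow> h \<in> borel_measurable borel" unfolding good_def by blast

lemma good_intl:
  assumes h: "good h" and l: "l > 0"
  shows "integrable lborel (\<lambda>u. h u * u * exp (- l * u))"
  using h l unfolding good_def by blast

lemma good_int1:
  assumes h: "good h"
  shows "integrable lborel (\<lambda>u. h u * u * exp (- u))"
  using good_intl[OF h, of 1] by simp

lemma good_int:
  assumes h: "good h" and c: "c \<in> borel_measurable borel" and B: "\<forall>y\<in>{0..1}. \<bar>c y\<bar> \<le> B"
  shows "integrable lborel (\<lambda>u. h u * u * exp (- u) * c (exp (- u)))"
proof (rule Bochner_Integration.integrable_bound)
  show "integrable lborel (\<lambda>u. B * (h u * u * exp (- 1 * u)))"
    using good_int1[OF h] by simp
  show "(\<lambda>u. h u * u * exp (- u) * c (exp (- u))) \<in> borel_measurable lborel"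
    using good_meas[OF h] c by measurable
  show "AE u in lborel. norm (h u * u * exp (- u) * c (exp (- u))) \<le> norm (B * (h u * u * exp (- 1 * u)))"
  proof (intro AE_I2)
    fix u :: real
    show "norm (h u * u * exp (- u) * c (exp (- u))) \<le> norm (B * (h u * u * exp (- 1 * u)))"
    proof (cases "u \<le> 0")
      case True then show ?thesis using good_zero[OF h True] by simp
    next
      case False
      then have "exp (- u) \<in> {0..1}" by auto
      then have cb: "\<bar>c (exp (- u))\<bar> \<le> B" using B by auto
      have "\<bar>h u * u * exp (- u) * c (exp (- u))\<bar> = \<bar>h u * u * exp (- u)\<bar> * \<bar>c (exp (- u))\<bar>"
        by (simp add: abs_mult)
      also have "\<dots> \<le> \<bar>h u * u * exp (- u)\<bar> * B" by (intro mult_left_mono cb) simp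
      also have "\<dots> \<le> \<bar>h u * u * exp (- u)\<bar> * \<bar>B\<bar>" by (intro mult_left_mono) auto
      also have "\<dots> = \<bar>B * (h u * u * exp (- 1 * u))\<bar>" by (simp add: abs_mult mult.commute)
      finally show ?thesis by simp
    qed
  qed
qed

lemma Phi_diff_bound:
  assumes h: "good h" and c: "c \<in> borel_measurable borel" and d: "d \<in> borel_measurable borel"
    and Bc: "\<forall>y\<in>{0..1}. \<bar>c y\<bar> \<le> B" and Bd: "\<forall>y\<in>{0..1}. \<bar>d y\<bar> \<le> B'"
    and cd: "\<forall>y\<in>{0..1}. \<bar>c y - d y\<bar> \<le> e"
  shows "\<bar>Phi h c - Phi h d\<bar> \<le> e * Phi h (\<lambda>_. 1)"
proof -
  have ic: "integrable lborel (\<lambda>u. h u * u * exp (- u) * c (exp (- u)))" by (rule good_int[OF h c Bc])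
  have id: "integrable lborel (\<lambda>u. h u * u * exp (- u) * d (exp (- u)))" by (rule good_int[OF h d Bd])
  have i1: "integrable lborel (\<lambda>u. h u * u * exp (- u) * 1)"
    using good_int1[OF h] by simp
  have "\<bar>Phi h c - Phi h d\<bar> = \<bar>\<integral>u. h u * u * exp (- u) * c (exp (- u)) - h u * u * exp (- u) * d (exp (- u)) \<partial>lborel\<bar>"
    unfolding Phi_def using Bochner_Integration.integral_diff[OF ic id] by simp
  also have "\<dots> \<le> (\<integral>u. norm (h u * u * exp (- u) * c (exp (- u)) - h u * u * exp (- u) * d (exp (- u))) \<partial>lborel)"
    using integral_norm_bound[of lborel "\<lambda>u. h u * u * exp (- u) * c (exp (- u)) - h u * u * exp (- u) * d (exp (- u))"]
    by (simp only: real_norm_def)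
  also have "\<dots> \<le> (\<integral>u. e * (h u * u * exp (- u) * 1) \<partial>lborel)"
  proof (rule integral_mono)
    show "integrable lborel (\<lambda>u. norm (h u * u * exp (- u) * c (exp (- u)) - h u * u * exp (- u) * d (exp (- u))))"
      by (intro integrable_norm Bochner_Integration.integrable_diff ic id)
    show "integrable lborel (\<lambda>u. e * (h u * u * exp (- u) * 1))" using i1 by (rule integrable_mult_right)
    fix u :: real
    show "norm (h u * u * exp (- u) * c (exp (- u)) - h u * u * exp (- u) * d (exp (- u))) \<le> e * (h u * u * exp (- u) * 1)"
    proof (cases "u \<le> 0")
      case True then show ?thesis using good_zero[OF h True] by simp
    next
      case False
      then have "exp (- u) \<in> {0..1}" by auto
      then have cb: "\<bar>c (exp (- u)) - d (exp (- u))\<bar> \<le> e" using cd by auto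
      have hp: "0 \<le> h u * u * exp (- u)" using good_nn[OF h, of u] False by simp
      have "norm (h u * u * exp (- u) * c (exp (- u)) - h u * u * exp (- u) * d (exp (- u)))
          = (h u * u * exp (- u)) * \<bar>c (exp (- u)) - d (exp (- u))\<bar>"
      proof -
        have "h u * u * exp (- u) * c (exp (- u)) - h u * u * exp (- u) * d (exp (- u))
            = (h u * u * exp (- u)) * (c (exp (- u)) - d (exp (- u)))" by (simp only: right_diff_distrib)
        then show ?thesis using hp by (metis abs_mult abs_of_nonneg real_norm_def)
      qed
      also have "\<dots> \<le> (h u * u * exp (- u)) * e" by (intro mult_left_mono cb hp)
      finally show ?thesis by (simp add: mult.commute)
    qed
  qed
  also have "\<dots> = e * Phi h (\<lambda>_. 1)" unfolding Phi_def by simp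
  finally show ?thesis .
qed

lemma exp_pow_aux: "exp (- u) * exp (- u) ^ k = exp (- (real k + 1) * u)"
proof -
  have "exp (- u) ^ k = exp (real k * (- u))" by (rule exp_of_nat_mult[symmetric])
  then have "exp (- u) * exp (- u) ^ k = exp (- u + real k * (- u))" by (simp only: exp_add)
  also have "- u + real k * (- u) = - (real k + 1) * u" by (simp add: algebra_simps)
  finally show ?thesis .
qed

lemma Phi_monom: "Phi h (\<lambda>y. y ^ k) = (\<integral>u. h u * u * exp (- (real k + 1) * u) \<partial>lborel)"
  unfolding Phi_def by (simp add: mult.assoc exp_pow_aux)

lemma Phi_poly:
  assumes h: "good h"
  shows "Phi h (\<lambda>y. \<Sum>i\<le>n. a i * y ^ i) = (\<Sum>i\<le>n. a i * Phi h (\<lambda>y. y ^ i))"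
proof -
  have int: "integrable lborel (\<lambda>u. a i * (h u * u * exp (- (real i + 1) * u)))" for i
    using good_intl[OF h, of "real i + 1"] by simp
  have "Phi h (\<lambda>y. \<Sum>i\<le>n. a i * y ^ i) = (\<integral>u. (\<Sum>i\<le>n. a i * (h u * u * exp (- (real i + 1) * u))) \<partial>lborel)"
  proof -
    have "h u * u * exp (- u) * (\<Sum>i\<le>n. a i * exp (- u) ^ i) = (\<Sum>i\<le>n. a i * (h u * u * exp (- (real i + 1) * u)))" for u
      unfolding sum_distrib_left
    proof (rule sum.cong[OF refl])
      fix i show "h u * u * exp (- u) * (a i * exp (- u) ^ i) = a i * (h u * u * exp (- (real i + 1) * u))"
        using exp_pow_aux[of u i] by (metis (no_types, lifting) mult.assoc mult.left_commute)
    qed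
    then show ?thesis unfolding Phi_def by simp
  qed
  also have "\<dots> = (\<Sum>i\<le>n. (\<integral>u. a i * (h u * u * exp (- (real i + 1) * u)) \<partial>lborel))"
    by (rule Bochner_Integration.integral_sum) (use int in auto)
  also have "\<dots> = (\<Sum>i\<le>n. a i * Phi h (\<lambda>y. y ^ i))"
    by (simp add: Phi_monom)
  finally show ?thesis .
qed

lemma Phi_nonneg:
  assumes h: "good h" and c: "\<forall>y\<in>{0..1}. 0 \<le> c y"
  shows "0 \<le> Phi h c"
  unfolding Phi_def
proof (rule Bochner_Integration.integral_nonneg)
  fix u :: real
  assume "u \<in> space lborel"
  show "0 \<le> h u * u * exp (- u) * c (exp (- u))"
  proof (cases "u \<le> 0")
    case True then show ?thesis using good_zero[OF h True] by simp
  next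
    case False
    then have "exp (- u) \<in> {0..1}" by auto
    then show ?thesis using c good_nn[OF h, of u] False by simp
  qed
qed

definition tent :: "real \<Rightarrow> real \<Rightarrow> real \<Rightarrow> real" where
  "tent a b u = max 0 (min (u - a) (b - u))"

definition ctent :: "real \<Rightarrow> real \<Rightarrow> real \<Rightarrow> real" where
  "ctent a b y = tent a b (- ln (max y (exp (- b))))"

lemma tent_nn: "0 \<le> tent a b u" unfolding tent_def by simp
lemma tent_le: "a \<le> b \<Longrightarrow> tent a b u \<le> b - a" unfolding tent_def by auto
lemma tent_out: "u \<notin> {a..b} \<Longrightarrow> tent a b u = 0" unfolding tent_def by auto

lemma ctent_exp:
  assumes "a < b"
  shows "ctent a b (exp (- u)) = tent a b u"
proof (cases "u \<le> b")
  case True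
  then have "max (exp (- u)) (exp (- b)) = exp (- u)" by simp
  then show ?thesis unfolding ctent_def by simp
next
  case False
  then have "max (exp (- u)) (exp (- b)) = exp (- b)" by simp
  then have "ctent a b (exp (- u)) = tent a b b" unfolding ctent_def by simp
  also have "\<dots> = 0" using assms unfolding tent_def by simp
  also have "\<dots> = tent a b u" using False by (simp add: tent_out)
  finally show ?thesis .
qed

lemma ctent_cont: "continuous_on UNIV (ctent a b)"
proof -
  have "continuous_on UNIV (\<lambda>y. ln (max y (exp (- b))))"
    by (intro continuous_intros) (auto simp: max_def)
  then show ?thesis unfolding ctent_def tent_def by (intro continuous_intros) (auto simp: max_def)
qed

lemma ctent_meas: "ctent a b \<in> borel_measurable borel"
  by (rule borel_measurable_continuous_onI[OF ctent_cont])

lemma ctent_bound: "a \<le> b \<Longrightarrow> \<forall>y\<in>{0..1}. \<bar>ctent a b y\<bar> \<le> b - a"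
  unfolding ctent_def using tent_nn tent_le by (simp add: abs_of_nonneg)

lemma ctent_nn: "\<forall>y\<in>{0..1}. 0 \<le> ctent a b y"
  unfolding ctent_def using tent_nn by simp

lemma Phi_ctent:
  assumes "a < b"
  shows "Phi h (ctent a b) = (\<integral>u. h u * (u * exp (- u) * tent a b u) \<partial>lborel)"
  unfolding Phi_def ctent_exp[OF assms] by (simp add: mult_ac)

definition W :: "real \<Rightarrow> real \<Rightarrow> real" where
  "W a b = (\<integral>u. u * exp (- u) * tent a b u \<partial>lborel)"

lemma W_int:
  assumes a: "0 < a" "a < b"
  shows "integrable lborel (\<lambda>u. u * exp (- u) * tent a b u)"
proof (rule Bochner_Integration.integrable_bound)
  show "integrable lborel (\<lambda>u. (b * (b - a)) * indicator {a..b} u)"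
    by (intro integrable_mult_right integrable_real_indicator) (auto simp: emeasure_lborel_Icc_eq)
  show "(\<lambda>u. u * exp (- u) * tent a b u) \<in> borel_measurable lborel"
    unfolding tent_def by measurable
  show "AE u in lborel. norm (u * exp (- u) * tent a b u) \<le> norm (b * (b - a) * indicator {a..b} u)"
  proof (intro AE_I2)
    fix u :: real
    show "norm (u * exp (- u) * tent a b u) \<le> norm (b * (b - a) * indicator {a..b} u)"
    proof (cases "u \<in> {a..b}")
      case True
      then have u: "0 < u" "u \<le> b" using a by auto
      have e: "exp (- u) \<le> 1" using u by simp
      have "u * exp (- u) \<le> b * 1" using u e by (intro mult_mono) auto
      moreover have "tent a b u \<le> b - a" using a by (intro tent_le) auto
      ultimately have "u * exp (- u) * tent a b u \<le> b * (b - a)"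
        using u tent_nn[of a b u] by (intro mult_mono) auto
      moreover have "0 \<le> u * exp (- u) * tent a b u" using u tent_nn[of a b u] by simp
      ultimately show ?thesis using True a by simp
    next
      case False then show ?thesis by (simp add: tent_out)
    qed
  qed
qed

lemma W_pos:
  assumes a: "0 < a" "a < b"
  shows "W a b > 0"
proof -
  define a' where "a' = a + (b - a) / 4"
  define b' where "b' = b - (b - a) / 4"
  define m where "m = a * exp (- b) * ((b - a) / 4)"
  have ab': "a' < b'" unfolding a'_def b'_def using a by (simp add: field_simps)
  have m: "m > 0" unfolding m_def using a by simp
  have "0 < m * (b' - a')" using m ab' by simp
  also have "m * (b' - a') = (\<integral>u. m * indicator {a'..b'} u \<partial>lborel)"
    using ab' by simp
  also have "\<dots> \<le> W a b"
    unfolding W_def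
  proof (rule integral_mono)
    show "integrable lborel (\<lambda>u. m * indicator {a'..b'} u)"
      by (intro integrable_mult_right integrable_real_indicator) (auto simp: emeasure_lborel_Icc_eq)
    show "integrable lborel (\<lambda>u. u * exp (- u) * tent a b u)" by (rule W_int[OF a])
    fix u :: real
    show "m * indicator {a'..b'} u \<le> u * exp (- u) * tent a b u"
    proof (cases "u \<in> {a'..b'}")
      case True
      then have u3: "a' \<le> u" "u \<le> b'" by auto
      have d1: "(b - a) / 4 \<le> u - a" "(b - a) / 4 \<le> b - u" using u3 unfolding a'_def b'_def by linarith+
      have q: "0 < (b - a) / 4" using a by simp
      have u: "a \<le> u" "u \<le> b" using d1 q by linarith+
      have t: "(b - a) / 4 \<le> tent a b u" using d1 unfolding tent_def by simp
      have e: "exp (- b) \<le> exp (- u)" using u by simp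
      have m1: "a * exp (- b) \<le> u * exp (- u)" using u e a by (intro mult_mono) auto
      have m2: "0 \<le> u * exp (- u)" using u a by simp
      have "a * exp (- b) * ((b - a) / 4) \<le> u * exp (- u) * tent a b u"
        using mult_mono[OF m1 t m2] q by simp
      then show ?thesis using True unfolding m_def by simp
    next
      case False
      show ?thesis
      proof (cases "u \<in> {a..b}")
        case True
        then have "0 < u" using a by auto
        then show ?thesis using False tent_nn[of a b u] by simp
      next
        case F2: False
        then show ?thesis using False by (simp add: tent_out)
      qed
    qed
  qed
  finally show ?thesis .
qed

locale taub =
  fixes Fl :: "real filter" and G :: "real \<Rightarrow> real \<Rightarrow> real" and g :: "real \<Rightarrow> real"
  assumes G_good: "eventually (\<lambda>r. good (G r)) Fl"
    and G_mono: "eventually (\<lambda>r. \<forall>u v. 0 < u \<longrightarrow> u \<le> v \<longrightarrow> G r v \<le> G r u) Fl"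
    and g_good: "good g"
    and g_mono: "\<And>u v. 0 < u \<Longrightarrow> u \<le> v \<Longrightarrow> g v \<le> g u"
    and g_cont: "isCont g 1"
    and lim: "\<And>l. l > 0 \<Longrightarrow> ((\<lambda>r. \<integral>u. G r u * u * exp (- l * u) \<partial>lborel)
                 \<longlongrightarrow> (\<integral>u. g u * u * exp (- l * u) \<partial>lborel)) Fl"
begin

lemma lim_monom: "((\<lambda>r. Phi (G r) (\<lambda>y. y ^ k)) \<longlongrightarrow> Phi g (\<lambda>y. y ^ k)) Fl"
  unfolding Phi_monom by (rule lim) simp

lemma lim_poly: "((\<lambda>r. Phi (G r) (\<lambda>y. \<Sum>i\<le>n. a i * y ^ i)) \<longlongrightarrow> Phi g (\<lambda>y. \<Sum>i\<le>n. a i * y ^ i)) Fl"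
proof -
  have "((\<lambda>r. \<Sum>i\<le>n. a i * Phi (G r) (\<lambda>y. y ^ i)) \<longlongrightarrow> (\<Sum>i\<le>n. a i * Phi g (\<lambda>y. y ^ i))) Fl"
    by (intro tendsto_sum tendsto_mult tendsto_const lim_monom)
  moreover have "eventually (\<lambda>r. (\<Sum>i\<le>n. a i * Phi (G r) (\<lambda>y. y ^ i)) = Phi (G r) (\<lambda>y. \<Sum>i\<le>n. a i * y ^ i)) Fl"
    using G_good by eventually_elim (rule Phi_poly[symmetric])
  ultimately have "((\<lambda>r. Phi (G r) (\<lambda>y. \<Sum>i\<le>n. a i * y ^ i)) \<longlongrightarrow> (\<Sum>i\<le>n. a i * Phi g (\<lambda>y. y ^ i))) Fl"
    by (rule Lim_transform_eventually)
  then show ?thesis by (simp only: Phi_poly[OF g_good])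
qed

lemma lim_cont:
  assumes cc: "continuous_on {0..1} c" and cm: "c \<in> borel_measurable borel"
  shows "((\<lambda>r. Phi (G r) c) \<longlongrightarrow> Phi g c) Fl"
proof (rule tendstoI)
  fix e :: real assume e: "e > 0"
  have "bounded (c ` {0..1})" by (rule compact_imp_bounded[OF compact_continuous_image[OF cc compact_Icc]])
  then obtain B where B: "\<forall>y\<in>{0..1}. \<bar>c y\<bar> \<le> B" by (auto simp: bounded_iff)
  define M1 where "M1 = Phi g (\<lambda>_. 1)"
  have M1: "M1 \<ge> 0" unfolding M1_def by (rule Phi_nonneg[OF g_good]) simp
  define d where "d = e / (4 * (M1 + 1))"
  have d: "d > 0" unfolding d_def using e M1 by simp
  obtain P where P: "real_polynomial_function P" "\<And>y. y \<in> {0..1} \<Longrightarrow> \<bar>c y - P y\<bar> < d"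
    using Stone_Weierstrass_real_polynomial_function[OF compact_Icc cc d] by blast
  obtain a n where Pe: "P = (\<lambda>y. \<Sum>i\<le>n. a i * y ^ i)"
    using real_polynomial_function_imp_sum[OF P(1)] by blast
  have Pm: "P \<in> borel_measurable borel" unfolding Pe by measurable
  have PB: "\<forall>y\<in>{0..1}. \<bar>P y\<bar> \<le> B + d"
  proof
    fix y :: real assume y: "y \<in> {0..1}"
    have "\<bar>P y\<bar> \<le> \<bar>c y\<bar> + \<bar>c y - P y\<bar>" by linarith
    then show "\<bar>P y\<bar> \<le> B + d" using B P(2)[OF y] y by fastforce
  qed
  have cd: "\<forall>y\<in>{0..1}. \<bar>c y - P y\<bar> \<le> d" using P(2) by (simp add: less_imp_le)
  have lim1: "((\<lambda>r. Phi (G r) (\<lambda>_. 1)) \<longlongrightarrow> M1) Fl"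
    using lim[of 1] unfolding M1_def Phi_def by simp
  have ev1: "eventually (\<lambda>r. Phi (G r) (\<lambda>_. 1) < M1 + 1) Fl"
    using order_tendstoD(2)[OF lim1, of "M1 + 1"] by simp
  have ev2: "eventually (\<lambda>r. dist (Phi (G r) P) (Phi g P) < e / 4) Fl"
    using tendstoD[OF lim_poly[of a n], of "e/4"] e unfolding Pe by simp
  show "eventually (\<lambda>r. dist (Phi (G r) c) (Phi g c) < e) Fl"
    using G_good ev1 ev2
  proof eventually_elim
    case (elim r)
    have 1: "\<bar>Phi (G r) c - Phi (G r) P\<bar> \<le> d * Phi (G r) (\<lambda>_. 1)"
      by (rule Phi_diff_bound[OF elim(1) cm Pm B PB cd])
    have 2: "\<bar>Phi g c - Phi g P\<bar> \<le> d * M1"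
      unfolding M1_def by (rule Phi_diff_bound[OF g_good cm Pm B PB cd])
    have 3: "\<bar>Phi (G r) P - Phi g P\<bar> < e / 4" using elim(3) by (simp add: dist_real_def)
    have "d * Phi (G r) (\<lambda>_. 1) \<le> d * (M1 + 1)" using elim(2) d by simp
    also have d4: "d * (M1 + 1) = e / 4" unfolding d_def using M1 by (simp add: field_simps)
    finally have 4: "d * Phi (G r) (\<lambda>_. 1) \<le> e / 4" .
    have "d * M1 \<le> d * (M1 + 1)" using d by simp
    then have 5: "d * M1 \<le> e / 4" using d4 by simp
    show ?case unfolding dist_real_def using 1 2 3 4 5 by linarith
  qed
qed

end

lemma Phi_ctent_int:
  assumes h: "good h" and ab: "a < b"
  shows "integrable lborel (\<lambda>u. h u * (u * exp (- u) * tent a b u))"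
proof -
  have "integrable lborel (\<lambda>u. h u * u * exp (- u) * ctent a b (exp (- u)))"
    by (rule good_int[OF h ctent_meas ctent_bound]) (use ab in simp)
  then show ?thesis unfolding ctent_exp[OF ab] by (simp add: mult_ac)
qed

context taub
begin

lemma upper_G:
  assumes a: "1 \<le> a" "a < b"
  shows "eventually (\<lambda>r. Phi (G r) (ctent a b) \<le> G r 1 * W a b) Fl"
  using G_good G_mono
proof eventually_elim
  case (elim r)
  have "Phi (G r) (ctent a b) = (\<integral>u. G r u * (u * exp (- u) * tent a b u) \<partial>lborel)"
    by (rule Phi_ctent[OF a(2)])
  also have "\<dots> \<le> (\<integral>u. G r 1 * (u * exp (- u) * tent a b u) \<partial>lborel)"
  proof (rule integral_mono)
    show "integrable lborel (\<lambda>u. G r u * (u * exp (- u) * tent a b u))"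
      by (rule Phi_ctent_int[OF elim(1) a(2)])
    show "integrable lborel (\<lambda>u. G r 1 * (u * exp (- u) * tent a b u))"
      using W_int[of a b] a by simp
    fix u :: real
    show "G r u * (u * exp (- u) * tent a b u) \<le> G r 1 * (u * exp (- u) * tent a b u)"
    proof (cases "u \<in> {a..b}")
      case True
      then have u: "1 \<le> u" using a by auto
      have "G r u \<le> G r 1" using elim(2) u by auto
      moreover have "0 \<le> u * exp (- u) * tent a b u" using u tent_nn[of a b u] by simp
      ultimately show ?thesis by (rule mult_right_mono)
    next
      case False then show ?thesis by (simp add: tent_out)
    qed
  qed
  also have "\<dots> = G r 1 * W a b" unfolding W_def by simp
  finally show ?case .
qed

lemma lower_G:
  assumes a: "0 < a" "a < b" "b \<le> 1"
  shows "eventually (\<lambda>r. G r 1 * W a b \<le> Phi (G r) (ctent a b)) Fl"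
  using G_good G_mono
proof eventually_elim
  case (elim r)
  have "G r 1 * W a b = (\<integral>u. G r 1 * (u * exp (- u) * tent a b u) \<partial>lborel)"
    unfolding W_def by simp
  also have "\<dots> \<le> (\<integral>u. G r u * (u * exp (- u) * tent a b u) \<partial>lborel)"
  proof (rule integral_mono)
    show "integrable lborel (\<lambda>u. G r u * (u * exp (- u) * tent a b u))"
      by (rule Phi_ctent_int[OF elim(1) a(2)])
    show "integrable lborel (\<lambda>u. G r 1 * (u * exp (- u) * tent a b u))"
      using W_int[of a b] a by simp
    fix u :: real
    show "G r 1 * (u * exp (- u) * tent a b u) \<le> G r u * (u * exp (- u) * tent a b u)"
    proof (cases "u \<in> {a..b}")
      case True
      then have u: "0 < u" "u \<le> 1" using a by auto
      have "G r 1 \<le> G r u" using elim(2) u by auto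
      moreover have "0 \<le> u * exp (- u) * tent a b u" using u tent_nn[of a b u] by simp
      ultimately show ?thesis by (rule mult_right_mono)
    next
      case False then show ?thesis by (simp add: tent_out)
    qed
  qed
  also have "\<dots> = Phi (G r) (ctent a b)"
    by (rule Phi_ctent[OF a(2), symmetric])
  finally show ?case .
qed

lemma lower_g:
  assumes a: "0 < a" "a < b"
  shows "g b * W a b \<le> Phi g (ctent a b)"
proof -
  have "g b * W a b = (\<integral>u. g b * (u * exp (- u) * tent a b u) \<partial>lborel)"
    unfolding W_def by simp
  also have "\<dots> \<le> (\<integral>u. g u * (u * exp (- u) * tent a b u) \<partial>lborel)"
  proof (rule integral_mono)
    show "integrable lborel (\<lambda>u. g u * (u * exp (- u) * tent a b u))"
      by (rule Phi_ctent_int[OF g_good a(2)])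
    show "integrable lborel (\<lambda>u. g b * (u * exp (- u) * tent a b u))"
      using W_int[of a b] a by simp
    fix u :: real
    show "g b * (u * exp (- u) * tent a b u) \<le> g u * (u * exp (- u) * tent a b u)"
    proof (cases "u \<in> {a..b}")
      case True
      then have u: "0 < u" "u \<le> b" using a by auto
      have "g b \<le> g u" using g_mono u by auto
      moreover have "0 \<le> u * exp (- u) * tent a b u" using u tent_nn[of a b u] by simp
      ultimately show ?thesis by (rule mult_right_mono)
    next
      case False then show ?thesis by (simp add: tent_out)
    qed
  qed
  also have "\<dots> = Phi g (ctent a b)"
    by (rule Phi_ctent[OF a(2), symmetric])
  finally show ?thesis .
qed

lemma upper_g:
  assumes a: "0 < a" "a < b"
  shows "Phi g (ctent a b) \<le> g a * W a b"
proof -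
  have "Phi g (ctent a b) = (\<integral>u. g u * (u * exp (- u) * tent a b u) \<partial>lborel)"
    by (rule Phi_ctent[OF a(2)])
  also have "\<dots> \<le> (\<integral>u. g a * (u * exp (- u) * tent a b u) \<partial>lborel)"
  proof (rule integral_mono)
    show "integrable lborel (\<lambda>u. g u * (u * exp (- u) * tent a b u))"
      by (rule Phi_ctent_int[OF g_good a(2)])
    show "integrable lborel (\<lambda>u. g a * (u * exp (- u) * tent a b u))"
      using W_int[of a b] a by simp
    fix u :: real
    show "g u * (u * exp (- u) * tent a b u) \<le> g a * (u * exp (- u) * tent a b u)"
    proof (cases "u \<in> {a..b}")
      case True
      then have u: "0 < u" "a \<le> u" using a by auto
      have "g u \<le> g a" using g_mono u a by auto
      moreover have "0 \<le> u * exp (- u) * tent a b u" using u tent_nn[of a b u] by simp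
      ultimately show ?thesis by (rule mult_right_mono)
    next
      case False then show ?thesis by (simp add: tent_out)
    qed
  qed
  also have "\<dots> = g a * W a b" unfolding W_def by simp
  finally show ?thesis .
qed

lemma lim_ctent: "((\<lambda>r. Phi (G r) (ctent a b) / W a b) \<longlongrightarrow> Phi g (ctent a b) / W a b) Fl"
proof -
  have "((\<lambda>r. Phi (G r) (ctent a b)) \<longlongrightarrow> Phi g (ctent a b)) Fl"
    by (rule lim_cont[OF continuous_on_subset[OF ctent_cont] ctent_meas]) auto
  from tendsto_mult_right[OF this, of "inverse (W a b)"] show ?thesis by (simp add: divide_inverse)
qed

theorem G_lim: "((\<lambda>r. G r 1) \<longlongrightarrow> g 1) Fl"
proof -
  have cont: "\<forall>e>0. \<exists>s>0. \<forall>x. x \<noteq> 1 \<and> \<bar>x - 1\<bar> < s \<longrightarrow> \<bar>g x - g 1\<bar> < e"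
    using g_cont unfolding isCont_def LIM_eq by simp
  show ?thesis
  proof (rule order_tendstoI)
    fix y assume y: "y < g 1"
    obtain s where s: "s > 0" "\<And>x. x \<noteq> 1 \<Longrightarrow> \<bar>x - 1\<bar> < s \<Longrightarrow> \<bar>g x - g 1\<bar> < g 1 - y"
      using cont y by (metis diff_gt_0_iff_gt)
    define b where "b = 1 + min s 1 / 2"
    have b: "1 < b" "b \<noteq> 1" "\<bar>b - 1\<bar> < s" unfolding b_def using s by auto
    have gb: "y < g b" using s(2)[OF b(2) b(3)] by linarith
    have W: "W 1 b > 0" by (rule W_pos) (use b in auto)
    have "g b \<le> Phi g (ctent 1 b) / W 1 b"
      using lower_g[of 1 b] b W by (simp add: pos_le_divide_eq)
    then have "y < Phi g (ctent 1 b) / W 1 b" using gb by linarith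
    from order_tendstoD(1)[OF lim_ctent this]
    have ev: "eventually (\<lambda>r. y < Phi (G r) (ctent 1 b) / W 1 b) Fl" .
    have ev2: "eventually (\<lambda>r. Phi (G r) (ctent 1 b) \<le> G r 1 * W 1 b) Fl"
      using upper_G[of 1 b] b(1) by simp
    show "eventually (\<lambda>r. y < G r 1) Fl"
      using ev ev2
    proof eventually_elim
      case (elim r)
      then have "Phi (G r) (ctent 1 b) / W 1 b \<le> G r 1" using W by (simp add: pos_divide_le_eq)
      then show ?case using elim(1) by linarith
    qed
  next
    fix y assume y: "g 1 < y"
    obtain s where s: "s > 0" "\<And>x. x \<noteq> 1 \<Longrightarrow> \<bar>x - 1\<bar> < s \<Longrightarrow> \<bar>g x - g 1\<bar> < y - g 1"
      using cont y by (metis diff_gt_0_iff_gt)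
    define a where "a = 1 - min s 1 / 2"
    have a: "0 < a" "a < 1" "a \<noteq> 1" "\<bar>a - 1\<bar> < s" unfolding a_def using s by auto
    have ga: "g a < y" using s(2)[OF a(3) a(4)] by linarith
    have W: "W a 1 > 0" by (rule W_pos) (use a in auto)
    have "Phi g (ctent a 1) / W a 1 \<le> g a"
      using upper_g[of a 1] a W by (simp add: pos_divide_le_eq)
    then have "Phi g (ctent a 1) / W a 1 < y" using ga by linarith
    from order_tendstoD(2)[OF lim_ctent this]
    have ev: "eventually (\<lambda>r. Phi (G r) (ctent a 1) / W a 1 < y) Fl" .
    have ev2: "eventually (\<lambda>r. G r 1 * W a 1 \<le> Phi (G r) (ctent a 1)) Fl"
      using lower_G[of a 1] a(1,2) by simp
    show "eventually (\<lambda>r. G r 1 < y) Fl"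
      using ev ev2
    proof eventually_elim
      case (elim r)
      then have "G r 1 \<le> Phi (G r) (ctent a 1) / W a 1" using W by (simp add: pos_le_divide_eq)
      then show ?case using elim(1) by linarith
    qed
  qed
qed

end

lemma gamma_moment_nn:
  assumes g: "0 \<le> \<gamma>" "\<gamma> \<le> 1" and l: "l > 0"
  shows "(\<integral>\<^sup>+u. ennreal (indicator {0<..} u * u powr (- \<gamma>) / Gamma (2 - \<gamma>) * u * exp (- l * u)) \<partial>lborel)
     = ennreal (l powr (\<gamma> - 2))"
proof -
  define Gm where "Gm = Gamma (2 - \<gamma>)"
  have Gm: "Gm > 0" unfolding Gm_def using g by simp
  define f where "f t = indicator {0..} t * (t powr ((2 - \<gamma>) - 1) / exp t)" for t :: real
  have fm[measurable]: "f \<in> borel_measurable borel" unfolding f_def by measurable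
  have "(\<integral>\<^sup>+t. ennreal (f t) \<partial>lborel) = ennreal Gm"
    unfolding f_def Gm_def
    by (rule nn_integral_has_integral_lebesgue[OF _ Gamma_integral_real]) (use g in auto)
  moreover have "(\<integral>\<^sup>+t. ennreal (f t) \<partial>lborel) = \<bar>l\<bar> * (\<integral>\<^sup>+x. ennreal (f (0 + l * x)) \<partial>lborel)"
    by (rule nn_integral_real_affine) (use l in auto)
  moreover have "f (0 + l * x) = l powr (1 - \<gamma>) * (indicator {0..} x * x powr (1 - \<gamma>) * exp (- l * x))" for x
  proof -
    have "indicator {0..} (l * x) = (indicator {0..} x :: real)" using l
      by (auto simp: indicator_def zero_le_mult_iff)
    then show ?thesis unfolding f_def using l by (simp add: powr_mult exp_minus field_simps)
  qed
  ultimately have eq1: "ennreal Gm = ennreal (l * l powr (1 - \<gamma>)) *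
      (\<integral>\<^sup>+x. ennreal (indicator {0..} x * x powr (1 - \<gamma>) * exp (- l * x)) \<partial>lborel)"
    using l by (simp add: ennreal_mult' nn_integral_cmult mult.assoc)
  define c where "c = l * l powr (1 - \<gamma>)"
  have c: "c > 0" unfolding c_def using l by simp
  have cpow: "c = l powr (2 - \<gamma>)"
  proof -
    have "l powr (2 - \<gamma>) = l powr (1 + (1 - \<gamma>))" by simp
    also have "\<dots> = l powr 1 * l powr (1 - \<gamma>)" by (rule powr_add)
    also have "\<dots> = c" unfolding c_def using l by simp
    finally show ?thesis by simp
  qed
  define I where "I = (\<integral>\<^sup>+x. ennreal (indicator {0..} x * x powr (1 - \<gamma>) * exp (- l * x)) \<partial>lborel)"
  have inv: "ennreal (1 / c) * ennreal c = 1" using c by (simp add: ennreal_mult'[symmetric])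
  have I: "I = ennreal (Gm / c)"
  proof -
    have "I = (ennreal (1 / c) * ennreal c) * I" using inv by simp
    also have "\<dots> = ennreal (1 / c) * ennreal Gm" using eq1 unfolding I_def c_def by (simp add: mult.assoc)
    also have "\<dots> = ennreal (Gm / c)" using c by (simp add: ennreal_mult'[symmetric])
    finally show ?thesis .
  qed
  have pt: "ennreal (indicator {0<..} u * u powr (- \<gamma>) / Gm * u * exp (- l * u))
      = ennreal (1 / Gm) * ennreal (indicator {0..} u * u powr (1 - \<gamma>) * exp (- l * u))" for u
  proof (cases "u > 0")
    case True
    have "u powr (1 - \<gamma>) = u powr (- \<gamma> + 1)" by simp
    also have "\<dots> = u powr (- \<gamma>) * u powr 1" by (rule powr_add)
    finally have "u powr (- \<gamma>) * u = u powr (1 - \<gamma>)" using True by simp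
    then have "indicator {0<..} u * u powr (- \<gamma>) / Gm * u * exp (- l * u)
        = (1 / Gm) * (indicator {0..} u * u powr (1 - \<gamma>) * exp (- l * u))"
      using True by (simp add: field_simps)
    then show ?thesis using Gm True by (simp add: ennreal_mult'[symmetric])
  next
    case False
    then show ?thesis by (cases "u = 0") (auto simp: indicator_def)
  qed
  have "(\<integral>\<^sup>+u. ennreal (indicator {0<..} u * u powr (- \<gamma>) / Gm * u * exp (- l * u)) \<partial>lborel)
      = ennreal (1 / Gm) * I"
    unfolding pt I_def by (rule nn_integral_cmult) measurable
  also have "\<dots> = ennreal (1 / c)" unfolding I using Gm c by (simp add: ennreal_mult'[symmetric])
  also have "1 / c = l powr (\<gamma> - 2)" unfolding cpow using l by (simp add: powr_minus_divide[symmetric] powr_minus)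
  finally show ?thesis unfolding Gm_def .
qed

context levy
begin

lemma H0_nonneg: "l > 0 \<Longrightarrow> 0 \<le> H0 l"
  unfolding H0_def
  by (rule integral_nonneg_AE) (use AE_pos in \<open>eventually_elim, use kern_nn[of "l * _"] in auto\<close>)

lemma fubini_int:
  assumes r: "r > 0" and a: "a > 0"
  shows "integrable lborel (\<lambda>u. Ft (r * u) * (a^2 * u * exp (- a * u)))"
    and "(\<integral>u. Ft (r * u) * (a^2 * u * exp (- a * u)) \<partial>lborel) = H0 (a / r)"
proof -
  have [measurable]: "Ft \<in> borel_measurable borel" by (rule Ft_meas)
  have m: "(\<lambda>u. Ft (r * u) * (a^2 * u * exp (- a * u))) \<in> borel_measurable lborel" by measurable
  have nn: "AE u in lborel. 0 \<le> Ft (r * u) * (a^2 * u * exp (- a * u))"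
    by (intro AE_I2) (use r in \<open>auto simp: Ft_def indicator_def zero_less_mult_iff\<close>)
  have "integrable lborel (\<lambda>u. Ft (r * u) * (a^2 * u * exp (- a * u))) \<and>
      (\<integral>u. Ft (r * u) * (a^2 * u * exp (- a * u)) \<partial>lborel) = H0 (a / r)"
    using nn_integral_eq_integrable[OF m nn H0_nonneg] fubini_rep[OF r a] r a by simp
  then show "integrable lborel (\<lambda>u. Ft (r * u) * (a^2 * u * exp (- a * u)))"
    and "(\<integral>u. Ft (r * u) * (a^2 * u * exp (- a * u)) \<partial>lborel) = H0 (a / r)" by auto
qed

lemma core:
  fixes H :: "real \<Rightarrow> real" and Fl :: "real filter"
  assumes gam: "0 \<le> \<gamma>" "\<gamma> \<le> 1"
    and Hpos: "\<And>l. l > 0 \<Longrightarrow> H l > 0" and HH0: "\<And>l. l > 0 \<Longrightarrow> H l = H0 l"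
    and ev: "eventually (\<lambda>r. r > 0) Fl"
    and rv: "\<And>c. c > 0 \<Longrightarrow> ((\<lambda>r. H (c / r) / H (1 / r)) \<longlongrightarrow> c powr \<gamma>) Fl"
  shows "((\<lambda>r. measure mu {r<..} / (H (1/r) / Gamma (2 - \<gamma>))) \<longlongrightarrow> 1) Fl"
proof -
  define G where "G r u = Ft (r * u) / H (1 / r)" for r u
  define g where "g u = indicator {0<..} u * u powr (- \<gamma>) / Gamma (2 - \<gamma>)" for u :: real
  have Gam: "Gamma (2 - \<gamma>) > 0" using gam by simp
  have [measurable]: "Ft \<in> borel_measurable borel" by (rule Ft_meas)
  have Ftnn: "0 \<le> Ft x" for x unfolding Ft_def by simp
  have Gint: "integrable lborel (\<lambda>u. G r u * u * exp (- l * u))"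
    and Gval: "(\<integral>u. G r u * u * exp (- l * u) \<partial>lborel) = H (l / r) / (l^2 * H (1 / r))"
    if r: "r > 0" and l: "l > 0" for r l
  proof -
    have e: "G r u * u * exp (- l * u) = Ft (r * u) * (l^2 * u * exp (- l * u)) * (1 / (l^2 * H (1/r)))" for u
      unfolding G_def using l by (simp add: field_simps power2_eq_square)
    show "integrable lborel (\<lambda>u. G r u * u * exp (- l * u))"
      unfolding e by (intro integrable_mult_left fubini_int(1)[OF r l])
    have "(\<integral>u. G r u * u * exp (- l * u) \<partial>lborel)
        = (\<integral>u. Ft (r * u) * (l^2 * u * exp (- l * u)) * (1 / (l^2 * H (1/r))) \<partial>lborel)"
      unfolding e ..
    also have "\<dots> = (\<integral>u. Ft (r * u) * (l^2 * u * exp (- l * u)) \<partial>lborel) * (1 / (l^2 * H (1/r)))"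
      by (rule integral_mult_left_zero)
    also have "\<dots> = H (l / r) / (l^2 * H (1 / r))"
      unfolding fubini_int(2)[OF r l] using HH0[of "l/r"] r l by simp
    finally show "(\<integral>u. G r u * u * exp (- l * u) \<partial>lborel) = H (l / r) / (l^2 * H (1 / r))" .
  qed
  have G_good: "eventually (\<lambda>r. good (G r)) Fl"
    using ev
  proof eventually_elim
    case (elim r)
    have Hp: "H (1 / r) > 0" using Hpos elim by simp
    show ?case unfolding good_def
    proof (intro conjI allI impI)
      show "0 \<le> G r u" for u unfolding G_def using Ftnn Hp by simp
      show "G r u = 0" if "u \<le> 0" for u
      proof -
        have "r * u \<le> 0" using that elim by (simp add: mult_nonneg_nonpos)
        then show ?thesis unfolding G_def Ft_def by simp
      qed
      show "G r \<in> borel_measurable borel" unfolding G_def by measurable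
      show "integrable lborel (\<lambda>u. G r u * u * exp (- l * u))" if "l > 0" for l
        by (rule Gint[OF elim that])
    qed
  qed
  have G_mono: "eventually (\<lambda>r. \<forall>u v. 0 < u \<longrightarrow> u \<le> v \<longrightarrow> G r v \<le> G r u) Fl"
    using ev
  proof eventually_elim
    case (elim r)
    have Hp: "H (1 / r) > 0" using Hpos elim by simp
    show ?case
    proof (intro allI impI)
      fix u v :: real assume uv: "0 < u" "u \<le> v"
      have ru: "0 < r * u" "r * u \<le> r * v" using uv elim by auto
      have "Ft (r * v) \<le> Ft (r * u)" unfolding Ft_def using tail_mono[OF ru] ru by simp
      then show "G r v \<le> G r u" unfolding G_def using Hp by (simp add: divide_right_mono)
    qed
  qed
  have g_good: "good g" unfolding good_def
  proof (intro conjI allI impI)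
    show "0 \<le> g u" for u unfolding g_def using Gam by simp
    show "g u = 0" if "u \<le> 0" for u unfolding g_def using that by simp
    show "g \<in> borel_measurable borel" unfolding g_def by measurable
    fix l :: real assume l: "l > 0"
    have m: "(\<lambda>u. g u * u * exp (- l * u)) \<in> borel_measurable lborel" unfolding g_def by measurable
    have nn: "AE u in lborel. 0 \<le> g u * u * exp (- l * u)"
      by (intro AE_I2) (use Gam in \<open>auto simp: g_def indicator_def\<close>)
    have "(\<integral>\<^sup>+u. ennreal (g u * u * exp (- l * u)) \<partial>lborel) = ennreal (l powr (\<gamma> - 2))"
      unfolding g_def by (rule gamma_moment_nn[OF gam l])
    then show "integrable lborel (\<lambda>u. g u * u * exp (- l * u))"
      using nn_integral_eq_integrable[OF m nn, of "l powr (\<gamma> - 2)"] by simp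
  qed
  have gval: "(\<integral>u. g u * u * exp (- l * u) \<partial>lborel) = l powr (\<gamma> - 2)" if l: "l > 0" for l
  proof -
    have m: "(\<lambda>u. g u * u * exp (- l * u)) \<in> borel_measurable lborel" unfolding g_def by measurable
    have nn: "AE u in lborel. 0 \<le> g u * u * exp (- l * u)"
      by (intro AE_I2) (use Gam in \<open>auto simp: g_def indicator_def\<close>)
    have "(\<integral>\<^sup>+u. ennreal (g u * u * exp (- l * u)) \<partial>lborel) = ennreal (l powr (\<gamma> - 2))"
      unfolding g_def by (rule gamma_moment_nn[OF gam l])
    then show ?thesis
      using nn_integral_eq_integrable[OF m nn, of "l powr (\<gamma> - 2)"] by simp
  qed
  have g_mono: "g v \<le> g u" if "0 < u" "u \<le> v" for u v
  proof -
    have "v powr (- \<gamma>) \<le> u powr (- \<gamma>)" using that gam by (intro powr_mono2') auto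
    then show ?thesis unfolding g_def using that Gam by (simp add: divide_right_mono)
  qed
  have g_cont: "isCont g 1"
  proof -
    have "continuous_on {0<..} (\<lambda>u. u powr (- \<gamma>) / Gamma (2 - \<gamma>))"
      by (intro continuous_intros) (use Gam in auto)
    then have "continuous_on {0<..} g"
      by (rule continuous_on_cong[THEN iffD1, rotated 2]) (auto simp: g_def)
    then show ?thesis using continuous_on_eq_continuous_at[of "{0<..}" g] by auto
  qed
  have lim: "((\<lambda>r. \<integral>u. G r u * u * exp (- l * u) \<partial>lborel) \<longlongrightarrow> (\<integral>u. g u * u * exp (- l * u) \<partial>lborel)) Fl"
    if l: "l > 0" for l
  proof -
    have A0: "((\<lambda>r. H (l / r) / H (1 / r) / l^2) \<longlongrightarrow> l powr \<gamma> / l^2) Fl"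
      by (intro tendsto_divide rv l tendsto_const) (use l in auto)
    have pw: "l powr \<gamma> / l^2 = l powr (\<gamma> - 2)"
      using l by (simp add: powr_diff)
    have ev3: "eventually (\<lambda>r. H (l / r) / H (1 / r) / l^2 = (\<integral>u. G r u * u * exp (- l * u) \<partial>lborel)) Fl"
      using ev
    proof eventually_elim
      case (elim r)
      show ?case unfolding Gval[OF elim l] by (simp add: divide_divide_eq_left mult.commute)
    qed
    have "((\<lambda>r. \<integral>u. G r u * u * exp (- l * u) \<partial>lborel) \<longlongrightarrow> l powr \<gamma> / l^2) Fl"
      by (rule Lim_transform_eventually[OF A0 ev3])
    then show ?thesis unfolding gval[OF l] pw .
  qed
  interpret T: taub Fl G g
    by (rule taub.intro) (fact G_good G_mono g_good g_mono g_cont lim)+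
  have A1: "((\<lambda>r. G r 1 * Gamma (2 - \<gamma>)) \<longlongrightarrow> g 1 * Gamma (2 - \<gamma>)) Fl"
    by (intro tendsto_mult T.G_lim tendsto_const)
  have g1: "g 1 * Gamma (2 - \<gamma>) = 1" unfolding g_def using Gam by simp
  have ev4: "eventually (\<lambda>r. G r 1 * Gamma (2 - \<gamma>) = measure mu {r<..} / (H (1/r) / Gamma (2 - \<gamma>))) Fl"
    using ev by eventually_elim (simp add: G_def Ft_def)
  from Lim_transform_eventually[OF A1 ev4] show ?thesis unfolding g1 .
qed

end

theorem proposition2p2:
  fixes b \<gamma> :: real and mu :: "real measure" and H :: "real \<Rightarrow> real"
  assumes "b \<ge> 0" and "levy_measure mu"
    and "\<gamma> \<in> {0..1}"
    and "\<And>lam. lam > 0 \<Longrightarrow> H lam = laplace_exponent b mu lam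
                 - lam * deriv (laplace_exponent b mu) lam"
  shows "(regvar_at_0 H \<gamma> \<longrightarrow>
            (\<lambda>r. measure mu {r<..}) \<sim>[at_top] (\<lambda>r. H (1 / r) / Gamma (2 - \<gamma>)))
       \<and> (regvar_at_top H \<gamma> \<longrightarrow>
            (\<lambda>r. measure mu {r<..}) \<sim>[at_right 0] (\<lambda>r. H (1 / r) / Gamma (2 - \<gamma>)))"
proof -
  interpret levy mu by (rule levy.intro) (rule assms(2))
  have HH0: "H l = H0 l" if "l > 0" for l
    using assms(4)[OF that] H_formula[OF that, of b] unfolding H0_def by simp
  have gam: "0 \<le> \<gamma>" "\<gamma> \<le> 1" using assms(3) by auto
  show ?thesis
  proof (intro conjI impI)
    assume rv: "regvar_at_0 H \<gamma>"
    have Hpos: "\<And>l. l > 0 \<Longrightarrow> H l > 0" using rv unfolding regvar_at_0_def by blast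
    have lim: "((\<lambda>r. H (c / r) / H (1 / r)) \<longlongrightarrow> c powr \<gamma>) at_top" if c: "c > 0" for c
    proof -
      have "((\<lambda>s. H (c * s) / H s) \<longlongrightarrow> c powr \<gamma>) (at_right 0)" using rv c unfolding regvar_at_0_def by blast
      from filterlim_compose[OF this filterlim_inverse_at_right_top]
      show ?thesis by (simp add: divide_inverse)
    qed
    show "(\<lambda>r. measure mu {r<..}) \<sim>[at_top] (\<lambda>r. H (1 / r) / Gamma (2 - \<gamma>))"
      by (rule asymp_equivI', rule core[OF gam Hpos HH0 _ lim]) auto
  next
    assume rv: "regvar_at_top H \<gamma>"
    have Hpos: "\<And>l. l > 0 \<Longrightarrow> H l > 0" using rv unfolding regvar_at_top_def by blast
    have lim: "((\<lambda>r. H (c / r) / H (1 / r)) \<longlongrightarrow> c powr \<gamma>) (at_right 0)" if c: "c > 0" for c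
    proof -
      have "((\<lambda>s. H (c * s) / H s) \<longlongrightarrow> c powr \<gamma>) at_top" using rv c unfolding regvar_at_top_def by blast
      from filterlim_compose[OF this filterlim_inverse_at_top_right]
      show ?thesis by (simp add: divide_inverse)
    qed
    show "(\<lambda>r. measure mu {r<..}) \<sim>[at_right 0] (\<lambda>r. H (1 / r) / Gamma (2 - \<gamma>))"
      by (rule asymp_equivI', rule core[OF gam Hpos HH0 _ lim]) (auto simp: eventually_at_right_less)
  qed
qed

end
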